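(* Let $k\ge1$ be an integer, $a,b\in(\frac1{10},10)$, $t_1\ge0$ and $C>0$. There exists a uniformly $C^1$, uniformly elliptic real $2\times2$ matrix function $A$ on $\mathbb{T}^2\times\mathbb{R}$ with $$A=\begin{pmatrix}a&0\\0&a\end{pmatrix}\text{ for }t\le t_1,\qquad A=\begin{pmatrix}a&0\\0&b\end{pmatrix}\text{ for }t\ge t_1+C,$$ belonging to the regularity class $R(10,\frac{10\sqrt\pi}{C})$, such that $u=\cos(kx)e^{-k\sqrt a\,t}$ solves $\ddot u+\operatorname{div}(A\nabla u)=0$ in $\mathbb{T}^2\times\mathbb{R}$.
   Context: $\mathbb{T}^2=(\mathbb{R}/2\pi\mathbb{Z})^2$ with coordinates $(x,y)$; $t$ the third coordinate. $\ddot u+\operatorname{div}(A\nabla u)$ means $\partial_t^2u+\sum_{i,j\in\{x,y\}}\partial_i(A_{ij}\partial_ju)$. Regularity class $R(\Lambda,C)$: $\Lambda^{-1}|\xi|^2\le\xi^TA\xi\le\Lambda|\xi|^2$ for all $\xi\in\mathbb{R}^2$ at every point, and the entries of $A$ are $C^1$ with all first partial derivatives in $x,y,t$ bounded by $C$ in absolute value. *)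

theory Defs
  imports "HOL-Analysis.Analysis"
begin

text \<open>Points of T^2 x R are represented by vectors p :: real^3 with
  p$1 = x, p$2 = y, p$3 = t; functions on the torus are 2pi-periodic in x and y.\<close>

definition pd :: "3 \<Rightarrow> (real^3 \<Rightarrow> real) \<Rightarrow> real^3 \<Rightarrow> real" where
  "pd k f p = frechet_derivative f (at p) (axis k 1)"

definition torus_periodic :: "(real^3 \<Rightarrow> 'b) \<Rightarrow> bool" where
  "torus_periodic F \<longleftrightarrow>
     (\<forall>p. F (p + axis 1 (2*pi)) = F p \<and> F (p + axis 2 (2*pi)) = F p)"

definition reg_class :: "real \<Rightarrow> real \<Rightarrow> (real^3 \<Rightarrow> real^2^2) \<Rightarrow> bool" where
  "reg_class \<Lambda> C A \<longleftrightarrow>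
     (\<forall>p. \<forall>\<xi>::real^2. (1/\<Lambda>) * (norm \<xi>)^2 \<le> \<xi> \<bullet> (A p *v \<xi>)
                      \<and> \<xi> \<bullet> (A p *v \<xi>) \<le> \<Lambda> * (norm \<xi>)^2) \<and>
     (\<forall>i j. (\<forall>p. (\<lambda>q. A q $ i $ j) differentiable (at p)) \<and>
            (\<forall>k. continuous_on UNIV (pd k (\<lambda>q. A q $ i $ j)) \<and>
                 (\<forall>p. \<bar>pd k (\<lambda>q. A q $ i $ j) p\<bar> \<le> C)))"

definition solves_eq :: "(real^3 \<Rightarrow> real^2^2) \<Rightarrow> (real^3 \<Rightarrow> real) \<Rightarrow> bool" where
  "solves_eq A u \<longleftrightarrow>
     (\<forall>p. u differentiable (at p)) \<and>
     (\<forall>p. pd 3 u differentiable (at p)) \<and>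
     (\<forall>i::2. \<forall>p. (\<lambda>q. A q $ i $ 1 * pd 1 u q + A q $ i $ 2 * pd 2 u q) differentiable (at p)) \<and>
     (\<forall>p. pd 3 (pd 3 u) p
          + pd 1 (\<lambda>q. A q $ 1 $ 1 * pd 1 u q + A q $ 1 $ 2 * pd 2 u q) p
          + pd 2 (\<lambda>q. A q $ 2 $ 1 * pd 1 u q + A q $ 2 $ 2 * pd 2 u q) p = 0)"

definition diag2 :: "real \<Rightarrow> real \<Rightarrow> real^2^2" where
  "diag2 a b = (\<chi> i j. if i = j then (if i = 1 then a else b) else 0)"

end

theory Submission
  imports Defs
begin

definition clamp :: "real \<Rightarrow> real" where "clamp s = max 0 (min 1 s)"
definition hs :: "real \<Rightarrow> real" where "hs s = 3 * (clamp s)^2 - 2 * (clamp s)^3"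
definition hs' :: "real \<Rightarrow> real" where "hs' s = 6 * clamp s * (1 - clamp s)"

lemma deriv_glue:
  fixes f :: "real \<Rightarrow> real"
  assumes "(f has_field_derivative D) (at x within {..x})" "(f has_field_derivative D) (at x within {x..})"
  shows "(f has_field_derivative D) (at x)"
proof -
  have U: "UNIV = {..x} \<union> {x..}" by auto
  have "at x = sup (at x within {..x}) (at x within {x..})"
    by (metis U at_within_union)
  then show ?thesis using assms unfolding has_field_derivative_def has_derivative_within
    by (auto intro: filterlim_sup)
qed

lemma poly_deriv: "((\<lambda>s::real. 3 * s^2 - 2 * s^3) has_field_derivative (6 * s * (1 - s))) (at s within S)"
  by (auto intro!: derivative_eq_intros simp: algebra_simps power2_eq_square)

lemma hs_deriv: "(hs has_field_derivative hs' s) (at s)"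
proof -
  consider "s < 0" | "s = 0" | "0 < s \<and> s < 1" | "s = 1" | "s > 1" by linarith
  then show ?thesis
  proof cases
    case 1
    show ?thesis
      apply (rule has_field_derivative_transform_within_open[of "\<lambda>_. 0" _ _ "{..<0}"])
      using 1 by (auto simp: hs_def hs'_def clamp_def)
  next
    case 3
    show ?thesis
      apply (rule has_field_derivative_transform_within_open[of "\<lambda>s::real. 3 * s^2 - 2 * s^3" _ _ "{0<..<1}"])
      using 3 poly_deriv[of s UNIV] by (auto simp: hs_def hs'_def clamp_def)
  next
    case 5
    show ?thesis
      apply (rule has_field_derivative_transform_within_open[of "\<lambda>_. 1" _ _ "{1<..}"])
      using 5 by (auto simp: hs_def hs'_def clamp_def)
  next
    case 2
    show ?thesis
    proof (rule deriv_glue)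
      show "(hs has_field_derivative hs' s) (at s within {..s})"
        apply (rule has_field_derivative_transform_within[of "\<lambda>_. 0" _ _ _ 1])
        using 2 by (auto simp: hs_def hs'_def clamp_def)
      show "(hs has_field_derivative hs' s) (at s within {s..})"
        apply (rule has_field_derivative_transform_within[of "\<lambda>s::real. 3 * s^2 - 2 * s^3" _ _ _ 1])
        using 2 poly_deriv[of s] by (auto simp: hs_def hs'_def clamp_def dist_real_def)
    qed
  next
    case 4
    show ?thesis
    proof (rule deriv_glue)
      show "(hs has_field_derivative hs' s) (at s within {s..})"
        apply (rule has_field_derivative_transform_within[of "\<lambda>_. 1" _ _ _ 1])
        using 4 by (auto simp: hs_def hs'_def clamp_def)
      show "(hs has_field_derivative hs' s) (at s within {..s})"
        apply (rule has_field_derivative_transform_within[of "\<lambda>s::real. 3 * s^2 - 2 * s^3" _ _ _ 1])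
        using 4 poly_deriv[of s] by (auto simp: hs_def hs'_def clamp_def dist_real_def)
    qed
  qed
qed

lemma hs'_cont: "continuous_on UNIV hs'"
  unfolding hs'_def clamp_def by (intro continuous_intros)

lemma hs'_bound: "\<bar>hs' s\<bar> \<le> 3/2"
proof -
  have c: "0 \<le> clamp s" "0 \<le> 1 - clamp s" by (auto simp: clamp_def)
  have p: "0 \<le> hs' s" unfolding hs'_def using c by simp
  have e: "hs' s = 3/2 - 3/2 * (2 * clamp s - 1)^2"
    unfolding hs'_def by (simp add: algebra_simps power2_eq_square)
  have "0 \<le> (2 * clamp s - 1)^2" by simp
  then have "hs' s \<le> 3/2" unfolding e by linarith
  with p show ?thesis by simp
qed

lemma hs_range: "0 \<le> hs s \<and> hs s \<le> 1"
proof -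
  have c: "0 \<le> clamp s" "clamp s \<le> 1" by (auto simp: clamp_def)
  have e1: "hs s = clamp s ^2 * (3 - 2 * clamp s)" by (simp add: hs_def algebra_simps power2_eq_square power3_eq_cube)
  have e2: "1 - hs s = (1 - clamp s)^2 * (1 + 2 * clamp s)" by (simp add: hs_def algebra_simps power2_eq_square power3_eq_cube)
  have "0 \<le> clamp s ^2 * (3 - 2 * clamp s)" using c by auto
  moreover have "0 \<le> (1 - clamp s)^2 * (1 + 2 * clamp s)" using c by auto
  ultimately show ?thesis using e1 e2 by linarith
qed

lemma hs_le0: "s \<le> 0 \<Longrightarrow> hs s = 0" by (simp add: hs_def clamp_def)
lemma hs_ge1: "s \<ge> 1 \<Longrightarrow> hs s = 1" by (simp add: hs_def clamp_def)

lemma pd_eq: "(f has_derivative f') (at p) \<Longrightarrow> pd k f p = f' (axis k 1)"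
  by (simp add: pd_def frechet_derivative_at[symmetric])

lemma nth_deriv: "((\<lambda>q::real^'n. q $ i) has_derivative (\<lambda>v. v $ i)) F"
  by (rule bounded_linear_imp_has_derivative) (rule bounded_linear_vec_nth)

lemma ax: "axis (1::3) (1::real) $ 1 = 1" "axis (1::3) (1::real) $ 3 = 0"
   "axis (3::3) (1::real) $ 1 = 0" "axis (3::3) (1::real) $ 3 = 1"
   "axis (2::3) (1::real) $ 1 = 0" "axis (2::3) (1::real) $ 3 = 0"
  by (simp_all add: axis_def)

lemma quad: "\<xi> \<bullet> (diag2 a x *v \<xi>) = a * (\<xi>$1)^2 + x * (\<xi>$2)^2"
  by (simp add: inner_vec_def matrix_vector_mult_def sum_2 diag2_def power2_eq_square)

lemma nrm: "(norm (\<xi>::real^2))^2 = (\<xi>$1)^2 + (\<xi>$2)^2"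
  unfolding power2_norm_eq_inner by (simp add: inner_vec_def sum_2 power2_eq_square)


definition gg :: "real \<Rightarrow> real \<Rightarrow> real \<Rightarrow> real \<Rightarrow> real \<Rightarrow> real" where
  "gg a b t1 C t = a + (b - a) * hs ((t - t1) / C)"
definition gg' :: "real \<Rightarrow> real \<Rightarrow> real \<Rightarrow> real \<Rightarrow> real \<Rightarrow> real" where
  "gg' a b t1 C t = (b - a) * (hs' ((t - t1) / C) * (1 / C))"

lemma gg_deriv: "(gg a b t1 C has_field_derivative gg' a b t1 C t) (at t)"
proof -
  have "((\<lambda>t. (t - t1) * (1 / C)) has_field_derivative (1 - 0) * (1 / C)) (at t)"
    by (intro DERIV_cmult_right DERIV_diff DERIV_ident DERIV_const)
  then have "((\<lambda>t. (t - t1) / C) has_field_derivative 1 / C) (at t)" by simp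
  from DERIV_chain2[OF hs_deriv this] show ?thesis
    unfolding gg_def gg'_def by (auto intro!: derivative_eq_intros)
qed

lemma gg_comp_deriv: "((\<lambda>q::real^3. gg a b t1 C (q$3)) has_derivative (\<lambda>v. v$3 * gg' a b t1 C (p$3))) (at p)"
  by (rule DERIV_compose_FDERIV[OF gg_deriv nth_deriv])

definition AA :: "real \<Rightarrow> real \<Rightarrow> real \<Rightarrow> real \<Rightarrow> real^3 \<Rightarrow> real^2^2" where
  "AA a b t1 C p = diag2 a (gg a b t1 C (p$3))"

lemma AA_entry: "AA a b t1 C q $ i $ j = (if i = j then (if i = 1 then a else gg a b t1 C (q$3)) else 0)"
  by (simp add: AA_def diag2_def)

lemma entry_deriv: "((\<lambda>q. AA a b t1 C q $ i $ j) has_derivative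
   (\<lambda>v. if i = j \<and> i \<noteq> 1 then v$3 * gg' a b t1 C (q$3) else 0)) (at q)"
  unfolding AA_entry
  by (cases "i = j"; cases "i = 1") (auto simp: gg_comp_deriv)

lemma entry_pd: "pd k (\<lambda>q. AA a b t1 C q $ i $ j) q =
   (if i = j \<and> i \<noteq> 1 \<and> k = 3 then gg' a b t1 C (q$3) else 0)"
  by (subst pd_eq[OF entry_deriv]) (auto simp: axis_def)


definition uu :: "nat \<Rightarrow> real \<Rightarrow> real^3 \<Rightarrow> real" where
  "uu k a p = cos (real k * p$1) * exp (- real k * sqrt a * p$3)"

lemma uu_deriv: "(uu k a has_derivative (\<lambda>v. - (real k * sin (real k * p$1)) * exp (- real k * sqrt a * p$3) * v$1
      - real k * sqrt a * cos (real k * p$1) * exp (- real k * sqrt a * p$3) * v$3)) (at p)"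
  unfolding uu_def
  by (rule derivative_eq_intros nth_deriv refl | simp)+ (auto simp: algebra_simps)

lemma pd1u: "pd 1 (uu k a) = (\<lambda>q. - (real k * sin (real k * q$1)) * exp (- real k * sqrt a * q$3))"
  by (rule ext, subst pd_eq[OF uu_deriv]) (simp add: axis_def)
lemma pd2u: "pd 2 (uu k a) = (\<lambda>q. 0)"
  by (rule ext, subst pd_eq[OF uu_deriv]) (simp add: axis_def)
lemma pd3u: "pd 3 (uu k a) = (\<lambda>q. - real k * sqrt a * cos (real k * q$1) * exp (- real k * sqrt a * q$3))"
  by (rule ext, subst pd_eq[OF uu_deriv]) (simp add: axis_def)

lemma u3_deriv: "((\<lambda>q::real^3. - real k * sqrt a * cos (real k * q$1) * exp (- real k * sqrt a * q$3)) has_derivative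
   (\<lambda>v. real k * sqrt a * real k * sin (real k * p$1) * exp (- real k * sqrt a * p$3) * v$1
     + real k * sqrt a * real k * sqrt a * cos (real k * p$1) * exp (- real k * sqrt a * p$3) * v$3)) (at p)"
  by (rule derivative_eq_intros nth_deriv refl | simp)+ (auto simp: algebra_simps)

lemma f1_deriv: "((\<lambda>q::real^3. a * (- (real k * sin (real k * q$1)) * exp (- real k * sqrt a * q$3))) has_derivative
   (\<lambda>v. - a * real k * real k * cos (real k * p$1) * exp (- real k * sqrt a * p$3) * v$1
     + a * real k * sqrt a * real k * sin (real k * p$1) * exp (- real k * sqrt a * p$3) * v$3)) (at p)"
  by (rule derivative_eq_intros nth_deriv refl | simp)+ (auto simp: algebra_simps)


theorem mainTheorem10:
  fixes k :: nat and a b t1 C :: real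
  assumes "k \<ge> 1"
    and "1/10 < a" "a < 10" "1/10 < b" "b < 10"
    and "t1 \<ge> 0" and "C > 0"
  shows "\<exists>A :: real^3 \<Rightarrow> real^2^2.
           torus_periodic A \<and>
           (\<forall>p. p$3 \<le> t1 \<longrightarrow> A p = diag2 a a) \<and>
           (\<forall>p. p$3 \<ge> t1 + C \<longrightarrow> A p = diag2 a b) \<and>
           reg_class 10 (10 * sqrt pi / C) A \<and>
           solves_eq A (\<lambda>p. cos (real k * p$1) * exp (- real k * sqrt a * p$3))"
proof (intro exI conjI)
  let ?A = "AA a b t1 C"
  show "torus_periodic ?A"
    by (simp add: torus_periodic_def AA_def axis_def)
  show "\<forall>p. p$3 \<le> t1 \<longrightarrow> ?A p = diag2 a a"
  proof (intro allI impI)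
    fix p :: "real^3" assume "p$3 \<le> t1"
    then have "(p$3 - t1) / C \<le> 0" using assms by (simp add: divide_nonpos_pos)
    then show "?A p = diag2 a a" by (simp add: AA_def gg_def hs_le0)
  qed
  show "\<forall>p. p$3 \<ge> t1 + C \<longrightarrow> ?A p = diag2 a b"
  proof (intro allI impI)
    fix p :: "real^3" assume "p$3 \<ge> t1 + C"
    then have "(p$3 - t1) / C \<ge> 1" using assms by (simp add: le_divide_eq)
    then show "?A p = diag2 a b" by (simp add: AA_def gg_def hs_ge1)
  qed
  have gb: "1/10 \<le> gg a b t1 C t \<and> gg a b t1 C t \<le> 10" for t
  proof -
    have h: "0 \<le> hs ((t - t1) / C)" "hs ((t - t1) / C) \<le> 1" using hs_range by auto
    have "gg a b t1 C t = (1 - hs ((t - t1) / C)) * a + hs ((t - t1) / C) * b"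
      by (simp add: gg_def algebra_simps)
    moreover have "(1 - hs ((t - t1) / C)) * a + hs ((t - t1) / C) * b \<ge> (1 - hs ((t - t1) / C)) * (1/10) + hs ((t - t1) / C) * (1/10)"
      using h assms by (intro add_mono mult_left_mono) auto
    moreover have "(1 - hs ((t - t1) / C)) * a + hs ((t - t1) / C) * b \<le> (1 - hs ((t - t1) / C)) * 10 + hs ((t - t1) / C) * 10"
      using h assms by (intro add_mono mult_left_mono) auto
    ultimately show ?thesis by (simp add: algebra_simps)
  qed
  have g'b: "\<bar>gg' a b t1 C t\<bar> \<le> 10 * sqrt pi / C" for t
  proof -
    have "\<bar>gg' a b t1 C t\<bar> = \<bar>b - a\<bar> * \<bar>hs' ((t - t1) / C)\<bar> / C"
      using assms by (simp add: gg'_def abs_mult)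
    also have "\<dots> \<le> 10 * (3/2) / C"
      using assms hs'_bound by (intro divide_right_mono mult_mono) auto
    also have "\<dots> \<le> 10 * sqrt pi / C"
    proof -
      have "(3/2::real) \<le> sqrt 3" by (rule real_le_rsqrt) (simp add: power2_eq_square)
      also have "sqrt 3 \<le> sqrt pi" using pi_gt3 by simp
      finally show ?thesis using assms by (intro divide_right_mono) auto
    qed
    finally show ?thesis .
  qed
  show "reg_class 10 (10 * sqrt pi / C) ?A"
    unfolding reg_class_def
  proof (intro conjI allI)
    fix p and \<xi> :: "real^2"
    have q: "\<xi> \<bullet> (?A p *v \<xi>) = a * (\<xi>$1)^2 + gg a b t1 C (p$3) * (\<xi>$2)^2"
      by (simp add: AA_def quad)
    have s1: "0 \<le> (\<xi>$1)^2" "0 \<le> (\<xi>$2)^2" by auto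
    show "1 / 10 * (norm \<xi>)\<^sup>2 \<le> \<xi> \<bullet> (?A p *v \<xi>)"
    proof -
      have "1/10 * (\<xi>$1)^2 \<le> a * (\<xi>$1)^2" using assms s1 by (intro mult_right_mono) auto
      moreover have "1/10 * (\<xi>$2)^2 \<le> gg a b t1 C (p$3) * (\<xi>$2)^2" using gb s1 by (intro mult_right_mono) auto
      ultimately show ?thesis unfolding q nrm by (simp add: distrib_left)
    qed
    show "\<xi> \<bullet> (?A p *v \<xi>) \<le> 10 * (norm \<xi>)\<^sup>2"
    proof -
      have "a * (\<xi>$1)^2 \<le> 10 * (\<xi>$1)^2" using assms s1 by (intro mult_right_mono) auto
      moreover have "gg a b t1 C (p$3) * (\<xi>$2)^2 \<le> 10 * (\<xi>$2)^2" using gb s1 by (intro mult_right_mono) auto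
      ultimately show ?thesis unfolding q nrm by (simp add: distrib_left)
    qed
  next
    fix i j :: 2 and p :: "real^3"
    show "(\<lambda>q. ?A q $ i $ j) differentiable (at p)"
      using entry_deriv[of a b t1 C i j p] by (auto simp: differentiable_def)
  next
    fix i j :: 2 and k :: 3
    show "continuous_on UNIV (pd k (\<lambda>q. ?A q $ i $ j))"
    proof -
      have pe: "pd k (\<lambda>q. ?A q $ i $ j) = (\<lambda>q. if i = j \<and> i \<noteq> 1 \<and> k = 3 then gg' a b t1 C (q$3) else 0)"
        by (rule ext) (rule entry_pd)
      have "continuous_on UNIV (\<lambda>q::real^3. (b - a) * (hs' ((q$3 - t1) / C) * (1 / C)))"
        by (intro continuous_intros continuous_on_compose2[OF hs'_cont]) (use assms in auto)
      then have "continuous_on UNIV (\<lambda>q::real^3. if i = j \<and> i \<noteq> 1 \<and> k = 3 then gg' a b t1 C (q$3) else 0)"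
      proof (cases "i = j \<and> i \<noteq> 1 \<and> k = 3")
        case True
        then show ?thesis using \<open>continuous_on UNIV _\<close> by (simp only: True if_True gg'_def simp_thms)
      next
        case False
        then show ?thesis by (simp only: False if_False continuous_on_const)
      qed
      then show ?thesis unfolding pe .
    qed
  next
    fix i j :: 2 and k :: 3 and p :: "real^3"
    show "\<bar>pd k (\<lambda>q. ?A q $ i $ j) p\<bar> \<le> 10 * sqrt pi / C"
      unfolding entry_pd using g'b assms by auto
  qed
  have ueq: "(\<lambda>p. cos (real k * p$1) * exp (- real k * sqrt a * p$3)) = uu k a"
    by (simp add: uu_def[abs_def])
  have fl1: "(\<lambda>q. ?A q $ 1 $ 1 * pd 1 (uu k a) q + ?A q $ 1 $ 2 * pd 2 (uu k a) q)
      = (\<lambda>q. a * (- (real k * sin (real k * q$1)) * exp (- real k * sqrt a * q$3)))"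
    by (simp add: AA_entry pd1u pd2u)
  have fl2: "(\<lambda>q. ?A q $ 2 $ 1 * pd 1 (uu k a) q + ?A q $ 2 $ 2 * pd 2 (uu k a) q) = (\<lambda>q. 0)"
    by (simp add: AA_entry pd1u pd2u)
  show "solves_eq ?A (\<lambda>p. cos (real k * p$1) * exp (- real k * sqrt a * p$3))"
    unfolding solves_eq_def ueq
  proof (intro conjI allI)
    fix p
    show "uu k a differentiable (at p)" using uu_deriv by (auto simp: differentiable_def)
    show "pd 3 (uu k a) differentiable (at p)" unfolding pd3u using u3_deriv by (auto simp: differentiable_def)
  next
    fix i :: 2 and p
    show "(\<lambda>q. ?A q $ i $ 1 * pd 1 (uu k a) q + ?A q $ i $ 2 * pd 2 (uu k a) q) differentiable (at p)"
    proof (cases "i = 1")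
      case True
      have "(\<lambda>q. ?A q $ 1 $ 1 * pd 1 (uu k a) q + ?A q $ 1 $ 2 * pd 2 (uu k a) q) differentiable (at p)"
        unfolding fl1 using f1_deriv[of a k p] by (auto simp: differentiable_def)
      then show ?thesis using True by simp
    next
      case False then have "i = 2" using exhaust_2[of i] by simp
      have "(\<lambda>q. ?A q $ 2 $ 1 * pd 1 (uu k a) q + ?A q $ 2 $ 2 * pd 2 (uu k a) q) differentiable (at p)"
        unfolding fl2 by simp
      then show ?thesis using \<open>i = 2\<close> by simp
    qed
  next
    fix p
    have sa: "sqrt a * sqrt a = a" using assms by simp
    have e3: "pd 3 (pd 3 (uu k a)) p = real k * sqrt a * real k * sqrt a * cos (real k * p$1) * exp (- real k * sqrt a * p$3)"
      unfolding pd3u by (subst pd_eq[OF u3_deriv]) (simp add: axis_def)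
    have e1: "pd 1 (\<lambda>q. ?A q $ 1 $ 1 * pd 1 (uu k a) q + ?A q $ 1 $ 2 * pd 2 (uu k a) q) p
        = - a * real k * real k * cos (real k * p$1) * exp (- real k * sqrt a * p$3)"
      unfolding fl1 by (subst pd_eq[OF f1_deriv]) (simp add: axis_def)
    have e2: "pd 2 (\<lambda>q. ?A q $ 2 $ 1 * pd 1 (uu k a) q + ?A q $ 2 $ 2 * pd 2 (uu k a) q) p = 0"
      unfolding fl2 by (subst pd_eq[of _ "\<lambda>_. 0"]) auto
    show "pd 3 (pd 3 (uu k a)) p
          + pd 1 (\<lambda>q. ?A q $ 1 $ 1 * pd 1 (uu k a) q + ?A q $ 1 $ 2 * pd 2 (uu k a) q) p
          + pd 2 (\<lambda>q. ?A q $ 2 $ 1 * pd 1 (uu k a) q + ?A q $ 2 $ 2 * pd 2 (uu k a) q) p = 0"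
      unfolding e1 e2 e3 using sa by (simp add: algebra_simps)
  qed
qed

end
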